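(* In the setting below with $P=\mathfrak A$, the worst case setting and the absolute error criterion, suppose $\lambda_1<1$. Then the following are equivalent: (a) $\{S_d\}$ is strongly polynomially tractable; (b) $\{S_d\}$ is polynomially tractable; (c) there exists $\tau\in(0,\infty)$ with $\lambda\in\ell_\tau$. The same equivalences hold if $\lambda_1\ge1$ and $\#I_d$ grows linearly with $d$, i.e. there is $c>0$ with $\#I_d\ge c\,d$ for all sufficiently large $d$.
   Context: Setting: $S_1:H_1\to G_1$ is a compact linear operator between real Hilbert spaces ($H_1$ infinite-dimensional separable); $\lambda=(\lambda_m)_{m\in\mathbb N}$, $\lambda_1\ge\lambda_2\ge\dots\ge0$, are the eigenvalues of $S_1^\dagger S_1$. $S_d=S_1^{\otimes d}:H_1^{\otimes d}\to G_1^{\otimes d}$. For each $d$ fix $\emptyset\ne I_d=\{i_1<\dots<i_{a_d}\}\subset\{1,\dots,d\}$ ($I_1=\{1\}$), put $a_d=\#I_d$, $b_d=d-a_d$, and fix one type $P\in\{\mathfrak S,\mathfrak A\}$ for all $d$; the problem $\{S_d\}$ is the family of restrictions of $S_d$ to the $I_d$-symmetric subspace (if $P=\mathfrak S$) or $I_d$-antisymmetric subspace (if $P=\mathfrak A$) of $H_1^{\otimes d}$, i.e. the range of $\frac1{a_d!}\sum_{\pi}(\pm1)U_\pi$, the sum over permutations $\pi$ of $\{1,\dots,d\}$ fixing all points outside $I_d$, $U_\pi(f_1\otimes\cdots\otimes f_d)=f_{\pi(1)}\otimes\cdots\otimes f_{\pi(d)}$, sign $(-1)^{|\pi|}$ used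 for $\mathfrak A$. Let $\nabla_d=\{k\in\mathbb N^d:k_{i_1}\le\dots\le k_{i_{a_d}}\}$ for $P=\mathfrak S$ and with strict inequalities for $P=\mathfrak A$; $\lambda_{d,k}=\prod_{l=1}^d\lambda_{k_l}$; $\psi:\mathbb N\to\nabla_d$ a bijection with $\lambda_{d,\psi(1)}\ge\lambda_{d,\psi(2)}\ge\cdots$. These are exactly the eigenvalues of $S_d^\dagger S_d$ on the subspace, and the information complexity (absolute error) is $n(\epsilon,d)=\#\{k\in\nabla_d:\lambda_{d,k}>\epsilon^2\}$, the initial error $\epsilon^{\rm init}_d=\sqrt{\lambda_{d,\psi(1)}}$ (equal to $\lambda_1^{d/2}$ if $P=\mathfrak S$, and $\sqrt{\lambda_1^{b_d}\lambda_1\lambda_2\cdots\lambda_{a_d}}$ if $P=\mathfrak A$). Polynomially tractable: $\exists C,p>0,q\ge0$ with $n(\epsilon,d)\le C\epsilon^{-p}d^q$ for all $d\in\mathbb N,\epsilon\in(0,1]$; strongly polynomially tractable: this with $q=0$. Standing assumptions: $\lambda_2>0$ and $\epsilon_d^{\rm init}>0$ for all $d$. $\ell_\tau$: sequences with $\|\lambda\|_{\ell_\tau}^\tau=\sum_m\lambda_m^\tau<\infty$. *)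

theory Defs
  imports "HOL-Analysis.Analysis"
begin

text \<open>The univariate eigenvalue sequence is \<open>lam :: nat \<Rightarrow> real\<close>, indexed from 1
  (\<open>lam 1 = \<lambda>\<^sub>1\<close>, \<open>lam 2 = \<lambda>\<^sub>2\<close>, ...; the value \<open>lam 0\<close> is irrelevant).
  A multi-index \<open>k \<in> \<nat>\<^sup>d\<close> is a function \<open>nat \<Rightarrow> nat\<close> with \<open>k l \<ge> 1\<close> for
  \<open>l \<in> {1..d}\<close> and \<open>k l = 0\<close> outside \<open>{1..d}\<close>.\<close>

definition eigen_seq :: "(nat \<Rightarrow> real) \<Rightarrow> bool" where
  "eigen_seq lam \<longleftrightarrow> (\<forall>m\<ge>1. 0 \<le> lam (Suc m) \<and> lam (Suc m) \<le> lam m)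
     \<and> ((\<lambda>m. lam m) \<longlonglongrightarrow> 0)"

definition index_family :: "(nat \<Rightarrow> nat set) \<Rightarrow> bool" where
  "index_family I \<longleftrightarrow> I 1 = {1} \<and> (\<forall>d\<ge>1. I d \<noteq> {} \<and> I d \<subseteq> {1..d})"

definition nabla_A :: "nat set \<Rightarrow> nat \<Rightarrow> (nat \<Rightarrow> nat) set" where
  "nabla_A J d = {k. (\<forall>l. l \<notin> {1..d} \<longrightarrow> k l = 0) \<and> (\<forall>l\<in>{1..d}. 1 \<le> k l)
       \<and> (\<forall>i\<in>J. \<forall>j\<in>J. i < j \<longrightarrow> k i < k j)}"

definition lam_d :: "(nat \<Rightarrow> real) \<Rightarrow> nat \<Rightarrow> (nat \<Rightarrow> nat) \<Rightarrow> real" where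
  "lam_d lam d k = (\<Prod>l\<in>{1..d}. lam (k l))"

definition n_A :: "(nat \<Rightarrow> real) \<Rightarrow> (nat \<Rightarrow> nat set) \<Rightarrow> real \<Rightarrow> nat \<Rightarrow> nat" where
  "n_A lam I \<epsilon> d = card {k \<in> nabla_A (I d) d. lam_d lam d k > \<epsilon>\<^sup>2}"

definition init_err_sq_A :: "(nat \<Rightarrow> real) \<Rightarrow> (nat \<Rightarrow> nat set) \<Rightarrow> nat \<Rightarrow> real" where
  "init_err_sq_A lam I d = lam 1 ^ (d - card (I d)) * (\<Prod>m\<in>{1..card (I d)}. lam m)"

definition poly_tractable_A :: "(nat \<Rightarrow> real) \<Rightarrow> (nat \<Rightarrow> nat set) \<Rightarrow> bool" where
  "poly_tractable_A lam I \<longleftrightarrow> (\<exists>C p q. C > 0 \<and> p > 0 \<and> q \<ge> 0 \<and>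
     (\<forall>d\<ge>1. \<forall>\<epsilon>\<in>{0<..1}. real (n_A lam I \<epsilon> d) \<le> C * \<epsilon> powr (-p) * real d powr q))"

definition strongly_poly_tractable_A :: "(nat \<Rightarrow> real) \<Rightarrow> (nat \<Rightarrow> nat set) \<Rightarrow> bool" where
  "strongly_poly_tractable_A lam I \<longleftrightarrow> (\<exists>C p. C > 0 \<and> p > 0 \<and>
     (\<forall>d\<ge>1. \<forall>\<epsilon>\<in>{0<..1}. real (n_A lam I \<epsilon> d) \<le> C * \<epsilon> powr (-p)))"

definition in_ell :: "real \<Rightarrow> (nat \<Rightarrow> real) \<Rightarrow> bool" where
  "in_ell \<tau> lam \<longleftrightarrow> summable (\<lambda>m. lam (Suc m) powr \<tau>)"

end

theory Submission
  imports Defs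
begin


lemma box_bij:
  assumes "finite L"
  shows "bij_betw (\<lambda>h l. if l\<in>L then h l else (0::nat)) (PiE L (\<lambda>_. {1..N}))
     {k. (\<forall>l. l\<notin>L \<longrightarrow> k l = 0) \<and> (\<forall>l\<in>L. k l \<in> {1..N})}"
proof -
  let ?E = "\<lambda>h l. if l\<in>L then h l else (0::nat)"
  have "inj_on ?E (PiE L (\<lambda>_. {1..N}))"
    unfolding inj_on_def by (auto simp: PiE_def extensional_def fun_eq_iff) metis
  moreover have "?E ` (PiE L (\<lambda>_. {1..N})) = {k. (\<forall>l. l\<notin>L \<longrightarrow> k l = 0) \<and> (\<forall>l\<in>L. k l \<in> {1..N})}"
  proof (intro equalityI subsetI)
    fix k assume "k \<in> {k. (\<forall>l. l\<notin>L \<longrightarrow> k l = 0) \<and> (\<forall>l\<in>L. k l \<in> {1..N})}"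
    then have k: "\<forall>l. l\<notin>L \<longrightarrow> k l = 0" "\<forall>l\<in>L. k l \<in> {1..N}" by auto
    have "restrict k L \<in> PiE L (\<lambda>_. {1..N})" using k by auto
    moreover have "k = ?E (restrict k L)" using k by (auto simp: fun_eq_iff)
    ultimately show "k \<in> ?E ` (PiE L (\<lambda>_. {1..N}))" by blast
  qed (auto simp: PiE_def Pi_def)
  ultimately show ?thesis by (simp add: bij_betw_def)
qed

lemma box_sum:
  fixes g :: "nat \<Rightarrow> nat \<Rightarrow> real"
  assumes L: "finite L"
  shows "(\<Sum>k\<in>{k. (\<forall>l. l\<notin>L \<longrightarrow> k l = 0) \<and> (\<forall>l\<in>L. k l \<in> {1..N})}. \<Prod>l\<in>L. g l (k l))
        = (\<Prod>l\<in>L. \<Sum>m\<in>{1..N}. g l m)"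
proof -
  have "(\<Sum>k\<in>{k. (\<forall>l. l\<notin>L \<longrightarrow> k l = 0) \<and> (\<forall>l\<in>L. k l \<in> {1..N})}. \<Prod>l\<in>L. g l (k l))
     = (\<Sum>h\<in>PiE L (\<lambda>_. {1..N}). \<Prod>l\<in>L. g l (if l\<in>L then h l else 0))"
    using sum.reindex_bij_betw[OF box_bij[OF L], of "\<lambda>k. \<Prod>l\<in>L. g l (k l)" N] by simp
  also have "\<dots> = (\<Sum>h\<in>PiE L (\<lambda>_. {1..N}). \<Prod>l\<in>L. g l (h l))"
    by (intro sum.cong refl prod.cong) auto
  also have "\<dots> = (\<Prod>l\<in>L. \<Sum>m\<in>{1..N}. g l m)"
    by (rule prod_sum_PiE[symmetric]) (use L in auto)
  finally show ?thesis .
qed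

lemma box_finite:
  assumes L: "finite L"
  shows "finite {k. (\<forall>l. l\<notin>L \<longrightarrow> k l = 0) \<and> (\<forall>l\<in>L. k l \<in> {1..(N::nat)})}"
  using bij_betw_finite[OF box_bij[OF L, of N]] L by (simp add: finite_PiE)

lemma sum_le_suminf1:
  fixes f :: "nat \<Rightarrow> real"
  assumes "summable (\<lambda>m. f (Suc m))" "\<And>m. 0 \<le> f m"
  shows "(\<Sum>m\<in>{1..N}. f m) \<le> (\<Sum>m. f (Suc m))"
proof -
  have "(\<Sum>m\<in>{1..N}. f m) = (\<Sum>m<N. f (Suc m))"
    by (metis One_nat_def sum.atLeast1_atMost_eq)
  also have "\<dots> \<le> (\<Sum>m. f (Suc m))"
    by (rule sum_le_suminf) (use assms in auto)
  finally show ?thesis .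
qed

lemma markov:
  fixes g :: "nat \<Rightarrow> nat \<Rightarrow> real" and A :: "(nat\<Rightarrow>nat) set"
  assumes L: "finite L"
   and A: "\<And>k. k\<in>A \<Longrightarrow> (\<forall>l. l\<notin>L \<longrightarrow> k l = 0) \<and> (\<forall>l\<in>L. 1 \<le> k l)"
   and lt: "\<And>k. k\<in>A \<Longrightarrow> t < c * (\<Prod>l\<in>L. g l (k l))"
   and t: "t>0" and c: "c\<ge>0" and g: "\<And>l m. 0 \<le> g l m"
   and s: "\<And>l. l\<in>L \<Longrightarrow> summable (\<lambda>m. g l (Suc m))"
  shows "real (card A) * t \<le> c * (\<Prod>l\<in>L. \<Sum>m. g l (Suc m))"
proof (cases "finite A")
  case False
  have "0 \<le> (\<Prod>l\<in>L. \<Sum>m. g l (Suc m))"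
    by (intro prod_nonneg suminf_nonneg) (use s g in auto)
  then show ?thesis using False c by simp
next
  case True
  define N where "N = Max (insert 0 ((\<lambda>(k,l). k l) ` (A \<times> L)))"
  have kN: "k l \<le> N" if "k\<in>A" "l\<in>L" for k l
    unfolding N_def using True L that by (intro Max_ge) force+
  let ?B = "{k. (\<forall>l. l\<notin>L \<longrightarrow> k l = 0) \<and> (\<forall>l\<in>L. k l \<in> {1..N})}"
  have sub: "A \<subseteq> ?B" using A kN by auto
  have "real (card A) * t = (\<Sum>k\<in>A. t)" by simp
  also have "\<dots> \<le> (\<Sum>k\<in>A. c * (\<Prod>l\<in>L. g l (k l)))"
    by (rule sum_mono) (use lt in \<open>auto intro: less_imp_le\<close>)
  also have "\<dots> \<le> (\<Sum>k\<in>?B. c * (\<Prod>l\<in>L. g l (k l)))"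
    by (rule sum_mono2[OF box_finite[OF L] sub]) (use c g in \<open>auto intro!: mult_nonneg_nonneg prod_nonneg\<close>)
  also have "\<dots> = c * (\<Prod>l\<in>L. \<Sum>m\<in>{1..N}. g l m)"
    by (subst sum_distrib_left[symmetric], subst box_sum[OF L]) (rule refl)
  also have "\<dots> \<le> c * (\<Prod>l\<in>L. \<Sum>m. g l (Suc m))"
    by (intro mult_left_mono prod_mono conjI sum_nonneg sum_le_suminf1 c) (use g s in auto)
  finally show ?thesis .
qed



lemma eigen_facts:
  assumes E: "eigen_seq lam" and p2: "lam 2 > 0"
  shows "\<And>m. 1 \<le> m \<Longrightarrow> 0 \<le> lam m"
    and "\<And>m m'. 1 \<le> m \<Longrightarrow> m \<le> m' \<Longrightarrow> lam m' \<le> lam m"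
    and "lam 1 > 0"
proof -
  have st: "\<And>m. 1 \<le> m \<Longrightarrow> lam (Suc m) \<le> lam m" "\<And>m. 1 \<le> m \<Longrightarrow> 0 \<le> lam (Suc m)"
    using E unfolding eigen_seq_def by auto
  show l1: "lam 1 > 0" using st(1)[of 1] p2 by (simp add: numeral_2_eq_2)
  show "0 \<le> lam m" if "1 \<le> m" for m
  proof (cases m)
    case 0 then show ?thesis using that by simp
  next
    case (Suc n) then show ?thesis using st(2)[of n] l1 by (cases n) auto
  qed
  show "lam m' \<le> lam m" if "1 \<le> m" "m \<le> m'" for m m'
    using that(2) proof (induction m' rule: dec_induct)
    case base then show ?case by simp
  next
    case (step n) then show ?case using st(1)[of n] that(1) by simp
  qed
qed

lemma card_le_kmax:
  assumes "finite J" "J \<noteq> {}" and k1: "\<forall>l\<in>J. 1 \<le> k l"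
    and inc: "\<forall>i\<in>J. \<forall>j\<in>J. i<j \<longrightarrow> k i < (k j::nat)"
  shows "card J \<le> k (Max J)"
proof -
  have mJ: "Max J \<in> J" using assms by simp
  have inj: "inj_on k J"
  proof (rule inj_onI)
    fix x y assume "x \<in> J" "y \<in> J" "k x = k y"
    then show "x = y" using inc by (cases x y rule: linorder_cases) force+
  qed
  have "k ` J \<subseteq> {1..k (Max J)}"
  proof
    fix z assume "z \<in> k ` J"
    then obtain l where l: "l \<in> J" "z = k l" by blast
    have "l \<le> Max J" using l assms by simp
    then have "k l \<le> k (Max J)"
    proof (cases "l = Max J")
      case False
      then have "l < Max J" using \<open>l \<le> Max J\<close> by simp
      then show ?thesis using inc l mJ by (meson less_imp_le)
    qed simp
    then show "z \<in> {1..k (Max J)}" using l k1 by auto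
  qed
  then have "card (k ` J) \<le> k (Max J)" using card_mono[of "{1..k (Max J)}"] by fastforce
  then show ?thesis using card_image[OF inj] by simp
qed

lemma rearr:
  fixes mu :: "nat \<Rightarrow> real" and k :: "nat \<Rightarrow> nat"
  assumes anti: "\<And>m m'. 1 \<le> m \<Longrightarrow> m \<le> m' \<Longrightarrow> mu m' \<le> mu m"
    and nn: "\<And>m. 1 \<le> m \<Longrightarrow> 0 \<le> mu m"
  shows "finite J \<Longrightarrow> \<forall>l\<in>J. 1 \<le> k l \<Longrightarrow> \<forall>i\<in>J. \<forall>j\<in>J. i<j \<longrightarrow> k i < k j \<Longrightarrow>
     (\<Prod>l\<in>J. mu (k l)) \<le> (\<Prod>j\<in>{1..card J}. mu j)"
proof (induction "card J" arbitrary: J)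
  case 0
  then show ?case by simp
next
  case (Suc n)
  then have ne: "J \<noteq> {}" by auto
  define m where "m = Max J"
  have mJ: "m \<in> J" using Suc ne m_def by simp
  have cJ: "card (J - {m}) = n" using Suc mJ by simp
  have IH: "(\<Prod>l\<in>J-{m}. mu (k l)) \<le> (\<Prod>j\<in>{1..n}. mu j)"
    using Suc.hyps(1)[OF cJ[symmetric]] Suc.prems cJ by auto
  have km: "Suc n \<le> k m" using card_le_kmax[OF Suc.prems(1) ne Suc.prems(2,3)] Suc.hyps(2) m_def by simp
  have "(\<Prod>l\<in>J. mu (k l)) = mu (k m) * (\<Prod>l\<in>J-{m}. mu (k l))"
    using Suc.prems(1) mJ by (simp add: prod.remove)
  also have "\<dots> \<le> mu (Suc n) * (\<Prod>j\<in>{1..n}. mu j)"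
    by (intro mult_mono IH anti km) (use nn Suc.prems mJ in \<open>auto intro!: prod_nonneg\<close>)
  also have "\<dots> = (\<Prod>j\<in>{1..Suc n}. mu j)"
    by (simp add: atLeastAtMostSuc_conv mult.commute)
  finally show ?case using Suc.hyps(2) by simp
qed



definition emb1 :: "nat \<Rightarrow> nat \<Rightarrow> nat" where "emb1 j = (\<lambda>l. if l = 1 then j else 0)"

lemma emb1_in: "1 \<le> j \<Longrightarrow> emb1 j \<in> nabla_A {1} 1"
  unfolding nabla_A_def emb1_def by auto

lemma lam_d_emb1: "lam_d lam 1 (emb1 j) = lam j"
  unfolding lam_d_def emb1_def by simp

lemma d1_finite:
  assumes E: "eigen_seq lam" and e: "0 < x"
  shows "finite {k \<in> nabla_A {1} 1. lam_d lam 1 k > x}"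
proof -
  have "(\<lambda>m. lam m) \<longlonglongrightarrow> 0" using E unfolding eigen_seq_def by auto
  then have "\<forall>\<^sub>F m in sequentially. dist (lam m) 0 < x" using e tendstoD by blast
  then obtain N where N: "\<And>m. m \<ge> N \<Longrightarrow> \<bar>lam m\<bar> < x" by (auto simp: eventually_sequentially)
  have "{k \<in> nabla_A {1} 1. lam_d lam 1 k > x} \<subseteq> emb1 ` {..<N}"
  proof
    fix k assume k: "k \<in> {k \<in> nabla_A {1} 1. lam_d lam 1 k > x}"
    then have k0: "\<And>l. l \<noteq> 1 \<Longrightarrow> k l = 0" unfolding nabla_A_def by auto
    have "k = emb1 (k 1)" using k0 unfolding emb1_def by (auto simp: fun_eq_iff)
    moreover have "lam (k 1) > x" using k unfolding lam_d_def by simp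
    then have "k 1 < N" using N by (meson abs_ge_self leI less_le_trans not_less_iff_gr_or_eq)
    ultimately show "k \<in> emb1 ` {..<N}" by blast
  qed
  then show ?thesis by (rule finite_subset) simp
qed

lemma PT_ell:
  assumes E: "eigen_seq lam" and p2: "lam 2 > 0" and I: "index_family I"
    and PT: "poly_tractable_A lam I"
  shows "\<exists>\<tau>>0. in_ell \<tau> lam"
proof -
  note ef = eigen_facts[OF E p2]
  obtain C p q where Cp: "C > 0" "p > 0" and
    bnd: "\<forall>d\<ge>1. \<forall>\<epsilon>\<in>{0<..1}. real (n_A lam I \<epsilon> d) \<le> C * \<epsilon> powr (-p) * real d powr q"
    using PT unfolding poly_tractable_A_def by blast
  have I1: "I 1 = {1}" using I unfolding index_family_def by simp
  define K where "K = 2 * max 1 (lam 1)"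
  have K: "K > 0" unfolding K_def by simp
  define D where "D = K powr p * C^2"
  have key: "lam m powr p \<le> D * inverse (real m ^ 2)" if m: "m \<ge> 1" for m
  proof (cases "lam m = 0")
    case True then show ?thesis using Cp K unfolding D_def by simp
  next
    case False
    then have lm: "lam m > 0" using ef(1)[OF m] by simp
    define x where "x = lam m / K"
    have x: "0 < x" "x \<le> 1" using lm ef(2)[OF order.refl m] K unfolding x_def K_def by (auto simp: field_simps)
    define \<epsilon> where "\<epsilon> = sqrt x"
    have e: "\<epsilon> \<in> {0<..1}" using x unfolding \<epsilon>_def by auto
    have e2: "\<epsilon>\<^sup>2 = x" using x unfolding \<epsilon>_def by simp
    have xlt: "x < lam m" using lm K unfolding x_def K_def
      by (simp add: field_simps)
    let ?S = "{k \<in> nabla_A {1} 1. lam_d lam 1 k > \<epsilon>\<^sup>2}"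
    have fin: "finite ?S" using d1_finite[OF E] x e2 by simp
    have sub: "emb1 ` {1..m} \<subseteq> ?S"
    proof
      fix k assume "k \<in> emb1 ` {1..m}"
      then obtain j where j: "j \<in> {1..m}" "k = emb1 j" by blast
      have "lam m \<le> lam j" using ef(2) j by auto
      then show "k \<in> ?S" using j emb1_in[of j] lam_d_emb1[of lam j] xlt e2 by auto
    qed
    have inj: "inj_on emb1 {1..m}" by (rule inj_onI) (drule fun_cong[of _ _ 1], simp add: emb1_def)
    have "card (emb1 ` {1..m}) \<le> card ?S" by (rule card_mono[OF fin sub])
    then have "m \<le> card ?S" using card_image[OF inj] by simp
    also have "card ?S = n_A lam I \<epsilon> 1" unfolding n_A_def I1 ..
    finally have "real m \<le> C * \<epsilon> powr (-p)" using bnd e by fastforce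
    also have "\<epsilon> powr (-p) = x powr (-p/2)" unfolding \<epsilon>_def using x
      by (simp add: sqrt_def root_powr_inverse powr_powr)
    finally have a: "real m \<le> C * x powr (-p/2)" .
    have "real m * x powr (p/2) \<le> C * (x powr (-p/2) * x powr (p/2))"
      using mult_right_mono[OF a, of "x powr (p/2)"] by (simp add: mult.assoc)
    also have "x powr (-p/2) * x powr (p/2) = 1" using x by (simp add: powr_add[symmetric])
    finally have b: "real m * x powr (p/2) \<le> C" by simp
    have "(real m * x powr (p/2))^2 \<le> C^2" using b by (intro power_mono) auto
    moreover have "x powr (p/2) * x powr (p/2) = x powr p" using x by (simp add: powr_add[symmetric])
    ultimately have c: "real m ^2 * x powr p \<le> C^2"
      by (simp add: power2_eq_square algebra_simps)
    have "lam m powr p = K powr p * x powr p" using K x unfolding x_def by (simp add: powr_divide)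
    also have "\<dots> \<le> K powr p * (C^2 / real m ^ 2)"
      using c m by (intro mult_left_mono) (auto simp: field_simps)
    finally show ?thesis unfolding D_def by (simp add: field_simps)
  qed
  have "summable (\<lambda>n. inverse (real n ^ 2))" by (rule inverse_power_summable) simp
  then have "summable (\<lambda>n. inverse (real (Suc n) ^ 2))" by (subst summable_Suc_iff)
  then have "summable (\<lambda>n. D * inverse (real (Suc n) ^ 2))" by (rule summable_mult)
  then have "summable (\<lambda>m. lam (Suc m) powr p)"
  proof (rule summable_comparison_test[rotated], intro exI allI impI)
    fix n :: nat
    show "norm (lam (Suc n) powr p) \<le> D * inverse (real (Suc n) ^ 2)"
      using key[of "Suc n"] by simp
  qed
  then show ?thesis using Cp unfolding in_ell_def by blast
qed



lemma eps_powr_lt: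
  fixes \<epsilon> P r :: real
  assumes "0 < \<epsilon>" "\<epsilon>\<^sup>2 < P" "r > 0"
  shows "\<epsilon> powr (2*r) < P powr r"
proof -
  have "\<epsilon> powr (2*r) = (\<epsilon>\<^sup>2) powr r"
    using assms by (simp add: powr_powr[symmetric])
  also have "\<dots> < P powr r" by (rule powr_less_mono2) (use assms in auto)
  finally show ?thesis .
qed

lemma nabla_props:
  assumes "k \<in> nabla_A J d"
  shows "\<And>l. l \<notin> {1..d} \<Longrightarrow> k l = 0" "\<And>l. l \<in> {1..d} \<Longrightarrow> 1 \<le> k l"
    "\<forall>i\<in>J. \<forall>j\<in>J. i < j \<longrightarrow> k i < k j"
  using assms unfolding nabla_A_def by auto

lemma SPT_caseA:
  assumes E: "eigen_seq lam" and p2: "lam 2 > 0" and l1: "lam 1 < 1"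
    and tau: "\<tau> > 0" "in_ell \<tau> lam"
  shows "strongly_poly_tractable_A lam I"
proof -
  note ef = eigen_facts[OF E p2]
  have sm: "summable (\<lambda>m. lam (Suc m) powr \<tau>)" using tau unfolding in_ell_def by simp
  define S where "S = (\<Sum>m. lam (Suc m) powr \<tau>)"
  have S0: "S \<ge> 0" unfolding S_def by (intro suminf_nonneg sm) auto
  obtain n :: nat where n: "lam 1 ^ n < 1 / (S + 1)"
    using real_arch_pow_inv[of "1/(S+1)" "lam 1"] S0 l1 by auto
  define r where "r = \<tau> + real n"
  have r0: "r > 0" unfolding r_def using tau by simp
  have bm: "lam (Suc m) powr r \<le> lam 1 ^ n * lam (Suc m) powr \<tau>" for m
  proof (cases "lam (Suc m) = 0")
    case True then show ?thesis by simp
  next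
    case False
    then have pos: "lam (Suc m) > 0" using ef(1)[of "Suc m"] by simp
    have "lam (Suc m) powr r = lam (Suc m) ^ n * lam (Suc m) powr \<tau>"
      unfolding r_def using pos by (simp add: powr_add powr_realpow)
    also have "\<dots> \<le> lam 1 ^ n * lam (Suc m) powr \<tau>"
      by (intro mult_right_mono power_mono) (use ef(2)[of 1 "Suc m"] pos in auto)
    finally show ?thesis .
  qed
  have smr: "summable (\<lambda>m. lam (Suc m) powr r)"
    by (rule summable_comparison_test[OF _ summable_mult[OF sm, of "lam 1 ^ n"]]) (use bm in auto)
  have Sr: "(\<Sum>m. lam (Suc m) powr r) \<le> 1"
  proof -
    have "(\<Sum>m. lam (Suc m) powr r) \<le> (\<Sum>m. lam 1 ^ n * lam (Suc m) powr \<tau>)"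
      by (rule suminf_le) (use bm smr summable_mult[OF sm] in auto)
    also have "\<dots> = lam 1 ^ n * S" unfolding S_def by (rule suminf_mult[OF sm])
    also have "\<dots> \<le> 1 / (S+1) * S" by (intro mult_right_mono) (use n S0 in auto)
    also have "\<dots> \<le> 1" using S0 by (simp add: field_simps)
    finally show ?thesis .
  qed
  have main: "real (n_A lam I \<epsilon> d) \<le> 1 * \<epsilon> powr (- (2 * r))" if d: "d \<ge> 1" and e: "\<epsilon> \<in> {0<..1}" for d \<epsilon>
  proof -
    let ?A = "{k \<in> nabla_A (I d) d. lam_d lam d k > \<epsilon>\<^sup>2}"
    have t: "\<epsilon> powr (2*r) > 0" using e by simp
    have "real (card ?A) * \<epsilon> powr (2*r) \<le> 1 * (\<Prod>l\<in>{1..d}. \<Sum>m. lam (Suc m) powr r)"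
    proof (rule markov[where g = "\<lambda>l m. lam m powr r"])
      fix k assume k: "k \<in> ?A"
      then show "(\<forall>l. l \<notin> {1..d} \<longrightarrow> k l = 0) \<and> (\<forall>l\<in>{1..d}. 1 \<le> k l)"
        using nabla_props[of k "I d" d] by auto
      have "\<epsilon> powr (2*r) < lam_d lam d k powr r"
        by (rule eps_powr_lt) (use e k r0 in auto)
      also have "\<dots> = (\<Prod>l\<in>{1..d}. lam (k l) powr r)"
        unfolding lam_d_def by (rule prod_powr_distrib)
      finally show "\<epsilon> powr (2*r) < 1 * (\<Prod>l\<in>{1..d}. lam (k l) powr r)" by simp
    qed (use t smr in auto)
    also have "\<dots> \<le> 1"
      unfolding mult_1_left by (rule prod_le_1) (use Sr in \<open>auto intro!: suminf_nonneg smr\<close>)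
    finally have "real (card ?A) \<le> 1 / \<epsilon> powr (2*r)" using t by (simp add: field_simps)
    then show "real (n_A lam I \<epsilon> d) \<le> 1 * \<epsilon> powr (- (2 * r))"
      unfolding n_A_def by (simp add: powr_minus_divide)
  qed
  show ?thesis unfolding strongly_poly_tractable_A_def
    using main r0 by (intro exI[of _ "1::real"] exI[of _ "2*r"]) auto
qed



lemma bounded_prod_seq:
  fixes h :: "nat \<Rightarrow> real"
  assumes h0: "\<And>j. 0 \<le> h j" and h1: "\<And>j. j \<ge> J0 \<Longrightarrow> h j \<le> 1"
  shows "(\<Prod>j\<in>{1..a}. h j) \<le> (\<Sum>b\<le>J0. \<Prod>j\<in>{1..b}. h j)"
proof -
  define x where "x b = (\<Prod>j\<in>{1..b}. h j)" for b
  have x0: "0 \<le> x b" for b unfolding x_def by (intro prod_nonneg) (use h0 in auto)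
  have le: "x b \<le> (\<Sum>b\<le>J0. x b)" if "b \<le> J0" for b
    by (rule member_le_sum) (use that x0 in auto)
  show ?thesis
  proof (cases "a \<le> J0")
    case True then show ?thesis using le[of a] unfolding x_def by simp
  next
    case False
    then have "J0 \<le> a" by simp
    then have "x a \<le> x J0"
    proof (induction a rule: dec_induct)
      case (step n)
      have "x (Suc n) = h (Suc n) * x n" unfolding x_def by (simp add: atLeastAtMostSuc_conv)
      also have "\<dots> \<le> 1 * x n" by (intro mult_right_mono h1 x0) (use step in auto)
      finally show ?case using step by simp
    qed simp
    then show ?thesis using le[of J0] unfolding x_def by simp
  qed
qed

lemma SPT_caseB:
  assumes E: "eigen_seq lam" and p2: "lam 2 > 0" and I: "index_family I"
    and c: "c > 0" and ev: "\<forall>\<^sub>F d in sequentially. real (card (I d)) \<ge> c * real d"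
    and tau: "\<tau> > 0" "in_ell \<tau> lam"
  shows "strongly_poly_tractable_A lam I"
proof -
  note ef = eigen_facts[OF E p2]
  define mu where "mu m = lam m powr \<tau>" for m
  have mu0: "0 \<le> mu m" for m unfolding mu_def by simp
  have mu_anti: "mu m' \<le> mu m" if "1 \<le> m" "m \<le> m'" for m m'
    unfolding mu_def using ef(1)[of m'] ef(2)[of m m'] that tau by (intro powr_mono2) auto
  have sT: "summable (\<lambda>m. mu (Suc m))" using tau unfolding in_ell_def mu_def by simp
  have sS: "summable (\<lambda>m. mu (Suc m) ^ 2)"
  proof (rule summable_comparison_test[OF _ summable_mult[OF sT, of "mu 1"]], intro exI allI impI)
    fix n :: nat
    show "norm (mu (Suc n) ^ 2) \<le> mu 1 * mu (Suc n)"
      using mu_anti[of 1 "Suc n"] mu0[of "Suc n"] by (simp add: power2_eq_square mult_right_mono)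
  qed
  define T where "T = (\<Sum>m. mu (Suc m))"
  define S where "S = (\<Sum>m. mu (Suc m) ^ 2)"
  define M where "M = max 1 (max T S)"
  have M1: "M \<ge> 1" unfolding M_def by simp
  define Q where "Q d = (\<Prod>j\<in>{1..card (I d)}. mu j)" for d
  have Q0: "0 \<le> Q d" for d unfolding Q_def by (intro prod_nonneg mu0)
  have Jsub: "I d \<subseteq> {1..d}" if "d \<ge> 1" for d using I that unfolding index_family_def by auto
  have bnd: "real (n_A lam I \<epsilon> d) \<le> Q d * M ^ d * \<epsilon> powr (-(4*\<tau>))"
    if d: "d \<ge> 1" and e: "\<epsilon> \<in> {0<..1}" for d \<epsilon>
  proof -
    let ?L = "{1..d}" and ?J = "I d"
    let ?A = "{k \<in> nabla_A ?J d. lam_d lam d k > \<epsilon>\<^sup>2}"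
    define g where "g l m = (if l \<in> ?J then mu m else mu m ^ 2)" for l m
    have JL: "?J \<subseteq> ?L" using Jsub[OF d] .
    have finJ: "finite ?J" using JL finite_subset by blast
    have t: "\<epsilon> powr (4*\<tau>) > 0" using e by simp
    have "real (card ?A) * \<epsilon> powr (4*\<tau>) \<le> Q d * (\<Prod>l\<in>?L. \<Sum>m. g l (Suc m))"
    proof (rule markov[where g = g])
      fix k assume k: "k \<in> ?A"
      note kp = nabla_props[of k ?J d]
      show "(\<forall>l. l \<notin> ?L \<longrightarrow> k l = 0) \<and> (\<forall>l\<in>?L. 1 \<le> k l)" using kp k by auto
      define a where "a = (\<Prod>l\<in>?J. mu (k l))"
      define b where "b = (\<Prod>l\<in>?L - ?J. mu (k l))"
      have a0: "0 \<le> a" unfolding a_def by (intro prod_nonneg mu0)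
      have aQ: "a \<le> Q d" unfolding a_def Q_def
        by (rule rearr[OF mu_anti mu0 finJ]) (use kp k JL in auto)
      have "\<epsilon> powr (2*(2*\<tau>)) < lam_d lam d k powr (2*\<tau>)"
        by (rule eps_powr_lt) (use e k tau in auto)
      also have "lam_d lam d k powr (2*\<tau>) = (lam_d lam d k powr \<tau>)^2"
        by (simp add: power2_eq_square powr_add[symmetric])
      also have "lam_d lam d k powr \<tau> = (\<Prod>l\<in>?L. mu (k l))"
        unfolding lam_d_def mu_def by (rule prod_powr_distrib)
      also have "\<dots> = b * a" unfolding a_def b_def by (rule prod.subset_diff[OF JL]) simp
      also have "(b * a)^2 = b^2 * (a * a)" by (simp add: power2_eq_square)
      also have "\<dots> \<le> b^2 * (Q d * a)"
        by (intro mult_left_mono mult_right_mono aQ a0) auto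
      also have "b^2 * (Q d * a) = Q d * (\<Prod>l\<in>?L. g l (k l))"
      proof -
        have "(\<Prod>l\<in>?L. g l (k l)) = (\<Prod>l\<in>?L - ?J. g l (k l)) * (\<Prod>l\<in>?J. g l (k l))"
          by (rule prod.subset_diff[OF JL]) simp
        also have "(\<Prod>l\<in>?L - ?J. g l (k l)) = b^2"
          unfolding b_def prod_power_distrib g_def by (rule prod.cong) auto
        also have "(\<Prod>l\<in>?J. g l (k l)) = a"
          unfolding a_def g_def by (rule prod.cong) auto
        finally show ?thesis by simp
      qed
      finally show "\<epsilon> powr (4*\<tau>) < Q d * (\<Prod>l\<in>?L. g l (k l))" by (simp add: mult.assoc)
    next
      fix l assume "l \<in> ?L"
      show "summable (\<lambda>m. g l (Suc m))" unfolding g_def using sT sS by (cases "l \<in> ?J") auto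
    qed (use t Q0 mu0 in \<open>auto simp: g_def\<close>)
    also have "\<dots> \<le> Q d * M ^ d"
    proof (intro mult_left_mono Q0)
      have "(\<Prod>l\<in>?L. \<Sum>m. g l (Suc m)) \<le> (\<Prod>l\<in>?L. M)"
      proof (rule prod_mono, intro conjI)
        fix l assume "l \<in> ?L"
        show "0 \<le> (\<Sum>m. g l (Suc m))" unfolding g_def using sT sS mu0
          by (cases "l \<in> ?J") (auto intro!: suminf_nonneg)
        show "(\<Sum>m. g l (Suc m)) \<le> M" unfolding g_def M_def T_def S_def by (cases "l \<in> ?J") auto
      qed
      then show "(\<Prod>l\<in>?L. \<Sum>m. g l (Suc m)) \<le> M ^ d" by simp
    qed
    finally have "real (card ?A) \<le> Q d * M ^ d / \<epsilon> powr (4*\<tau>)" using t by (simp add: field_simps)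
    then show ?thesis unfolding n_A_def by (simp add: powr_minus_divide)
  qed
  define K where "K = M powr (1/c)"
  have K1: "K \<ge> 1" unfolding K_def using M1 c by (simp add: ge_one_powr_ge_zero)
  define h where "h j = K * mu j" for j
  have h0: "0 \<le> h j" for j unfolding h_def using K1 mu0 by simp
  have "(lam \<longlongrightarrow> 0) sequentially" using E unfolding eigen_seq_def by simp
  then have "((\<lambda>m. lam m powr \<tau>) \<longlongrightarrow> 0) sequentially"
    by (rule tendsto_zero_powrI[where g = "\<lambda>_. \<tau>"])
       (use tau ef(1) in \<open>auto simp: eventually_sequentially intro!: exI[of _ 1]\<close>)
  then have "(h \<longlongrightarrow> K * 0) sequentially" unfolding h_def mu_def by (intro tendsto_mult) auto
  then have "\<forall>\<^sub>F j in sequentially. dist (h j) 0 < 1" using tendstoD[of h 0 sequentially 1] by simp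
  then obtain J0 where J0: "\<And>j. j \<ge> J0 \<Longrightarrow> h j \<le> 1"
    unfolding eventually_sequentially dist_real_def by (metis abs_less_iff diff_0_right less_le)
  obtain D0 where D0: "\<And>d. d \<ge> D0 \<Longrightarrow> real (card (I d)) \<ge> c * real d"
    using ev unfolding eventually_sequentially by blast
  define F where "F d = Q d * M ^ d" for d
  have F0: "0 \<le> F d" for d unfolding F_def using Q0 M1 by simp
  define B where "B = (\<Sum>b\<le>J0. \<Prod>j\<in>{1..b}. h j) + (\<Sum>d<D0. F d)"
  have FB: "F d \<le> B" for d
  proof (cases "d < D0")
    case True
    have "F d \<le> (\<Sum>d<D0. F d)" by (rule member_le_sum) (use True F0 in auto)
    moreover have "0 \<le> (\<Sum>b\<le>J0. \<Prod>j\<in>{1..b}. h j)" by (intro sum_nonneg prod_nonneg h0)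
    ultimately show ?thesis unfolding B_def by simp
  next
    case False
    let ?a = "card (I d)"
    have cd: "c * real d \<le> real ?a" using D0 False by simp
    have "M ^ d = M powr real d" using M1 by (simp add: powr_realpow)
    also have "\<dots> \<le> M powr (real ?a / c)"
      by (rule powr_mono) (use cd c M1 in \<open>auto simp: field_simps\<close>)
    also have "\<dots> = K ^ ?a" unfolding K_def using M1 c
      by (simp add: powr_powr powr_realpow[symmetric] mult.commute)
    finally have Md: "M ^ d \<le> K ^ ?a" .
    have "F d \<le> Q d * K ^ ?a" unfolding F_def by (intro mult_left_mono Md Q0)
    also have "\<dots> = (\<Prod>j\<in>{1..?a}. h j)" unfolding Q_def h_def by (simp add: prod.distrib mult.commute)
    also have "\<dots> \<le> (\<Sum>b\<le>J0. \<Prod>j\<in>{1..b}. h j)" by (rule bounded_prod_seq[OF h0 J0])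
    also have "\<dots> \<le> B" unfolding B_def using F0 by (simp add: sum_nonneg)
    finally show ?thesis .
  qed
  define C where "C = max 1 B"
  have main: "real (n_A lam I \<epsilon> d) \<le> C * \<epsilon> powr (-(4*\<tau>))"
    if d: "d \<ge> 1" and e: "\<epsilon> \<in> {0<..1}" for d \<epsilon>
  proof -
    have "real (n_A lam I \<epsilon> d) \<le> F d * \<epsilon> powr (-(4*\<tau>))" using bnd[OF d e] unfolding F_def .
    also have "\<dots> \<le> C * \<epsilon> powr (-(4*\<tau>))"
      by (intro mult_right_mono) (use FB[of d] in \<open>auto simp: C_def\<close>)
    finally show ?thesis .
  qed
  show ?thesis unfolding strongly_poly_tractable_A_def
    using main tau by (intro exI[of _ C] exI[of _ "4*\<tau>"]) (auto simp: C_def)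
qed


theorem theorem4:
  fixes lam :: "nat \<Rightarrow> real" and I :: "nat \<Rightarrow> nat set"
  assumes "eigen_seq lam"
    and "index_family I"
    and "lam 2 > 0"
    and "\<forall>d\<ge>1. init_err_sq_A lam I d > 0"
    and "lam 1 < 1 \<or>
         (\<exists>c>0. \<forall>\<^sub>F d in sequentially. real (card (I d)) \<ge> c * real d)"
  shows "(strongly_poly_tractable_A lam I \<longleftrightarrow> poly_tractable_A lam I)
       \<and> (poly_tractable_A lam I \<longleftrightarrow> (\<exists>\<tau>>0. in_ell \<tau> lam))"
proof -
  have A: "poly_tractable_A lam I" if spt: "strongly_poly_tractable_A lam I"
  proof -
    obtain C p where Cp: "C > 0" "p > 0"
      and b: "\<forall>d\<ge>1. \<forall>\<epsilon>\<in>{0<..1}. real (n_A lam I \<epsilon> d) \<le> C * \<epsilon> powr (-p)"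
      using spt unfolding strongly_poly_tractable_A_def by blast
    have "\<forall>d\<ge>1. \<forall>\<epsilon>\<in>{0<..1}. real (n_A lam I \<epsilon> d) \<le> C * \<epsilon> powr (-p) * real d powr 0"
      using b by auto
    then show ?thesis unfolding poly_tractable_A_def using Cp by blast
  qed
  have B: "\<exists>\<tau>>0. in_ell \<tau> lam" if "poly_tractable_A lam I"
    by (rule PT_ell[OF assms(1,3,2) that])
  have C: "strongly_poly_tractable_A lam I" if ell: "\<exists>\<tau>>0. in_ell \<tau> lam"
  proof -
    obtain \<tau> where t: "\<tau> > 0" "in_ell \<tau> lam" using ell by blast
    show ?thesis
    proof (cases "lam 1 < 1")
      case True
      show ?thesis by (rule SPT_caseA[OF assms(1,3) True t])
    next
      case False
      then obtain c where "c > 0" "\<forall>\<^sub>F d in sequentially. real (card (I d)) \<ge> c * real d"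
        using assms(5) by blast
      then show ?thesis using SPT_caseB[OF assms(1,3,2) _ _ t] by blast
    qed
  qed
  show ?thesis using A B C by blast
qed

end
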